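(* Let $f:\mathbb{R}\to\mathbb{R}$ be $f(y)=\sum_{k=0}^\infty 2^{-k}\|2^{k^2}y\|$, where $\|t\|=\operatorname{dist}(t,\mathbb{Z})$. Then $f$ is continuous and has no $\mathsf{M}$-points. Consequently every monotone subset of the graph of $f$ is meager in the graph, and $f$ has a derivative (finite or infinite) at no point.
   Context: With $\psi(x)=(x,f(x))$ and the Euclidean norm, $y$ is an $\mathsf{M}$-point of $f$ if there are $c\ge1$ and $\varepsilon>0$ with $|\psi(x)-\psi(y)|\le c|\psi(x)-\psi(z)|$ for all $x\in(y-\varepsilon,y)$, $z\in(y,y+\varepsilon)$. A metric space is monotone if there are a linear order $<$ and $c>0$ with $d(x,y)\le c\,d(x,z)$ whenever $x<y<z$. *)

theory Defs
  imports "HOL-Analysis.Analysis"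
begin

definition dZ :: "real \<Rightarrow> real" where
  "dZ t = infdist t \<int>"

definition f48 :: "real \<Rightarrow> real" where
  "f48 y = (\<Sum>k. (1/2) ^ k * dZ (2 ^ (k^2) * y))"

text \<open>Graph map; the product metric on real \<times> real is the Euclidean one.\<close>
definition psi :: "(real \<Rightarrow> real) \<Rightarrow> real \<Rightarrow> real \<times> real" where
  "psi f x = (x, f x)"

definition M_point :: "(real \<Rightarrow> real) \<Rightarrow> real \<Rightarrow> bool" where
  "M_point f y \<longleftrightarrow> (\<exists>c\<ge>1. \<exists>\<epsilon>>0. \<forall>x\<in>{y-\<epsilon><..<y}. \<forall>z\<in>{y<..<y+\<epsilon>}.
      dist (psi f x) (psi f y) \<le> c * dist (psi f x) (psi f z))"

definition graph :: "(real \<Rightarrow> real) \<Rightarrow> (real \<times> real) set" where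
  "graph f = range (psi f)"

definition monotone_metric :: "'a::metric_space set \<Rightarrow> bool" where
  "monotone_metric S \<longleftrightarrow> (\<exists>r c. strict_linear_order_on S r \<and> c > 0 \<and>
     (\<forall>x\<in>S. \<forall>y\<in>S. \<forall>z\<in>S. (x,y) \<in> r \<and> (y,z) \<in> r \<longrightarrow> dist x y \<le> c * dist x z))"

definition nowhere_dense_in :: "'a topology \<Rightarrow> 'a set \<Rightarrow> bool" where
  "nowhere_dense_in X A \<longleftrightarrow> A \<subseteq> topspace X \<and> X interior_of (X closure_of A) = {}"

definition meager_in :: "'a topology \<Rightarrow> 'a set \<Rightarrow> bool" where
  "meager_in X A \<longleftrightarrow> (\<exists>F. countable F \<and> (\<forall>N\<in>F. nowhere_dense_in X N) \<and> A \<subseteq> \<Union>F)"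

end

theory Submission
  imports Defs
begin

lemma dZ_eq: "dZ t = min (t - of_int \<lfloor>t\<rfloor>) (of_int \<lceil>t\<rceil> - t)"
proof -
  have ne: "(\<int>::real set) \<noteq> {}" by auto
  let ?d = "min (t - of_int \<lfloor>t\<rfloor>) (of_int \<lceil>t\<rceil> - t)"
  have le: "infdist t \<int> \<le> ?d"
  proof -
    have "infdist t \<int> \<le> dist t (of_int \<lfloor>t\<rfloor>)" by (rule infdist_le) simp
    moreover have "infdist t \<int> \<le> dist t (of_int \<lceil>t\<rceil>)" by (rule infdist_le) simp
    ultimately show ?thesis by (simp add: dist_real_def)
  qed
  have ge: "?d \<le> infdist t \<int>"
    unfolding infdist_notempty[OF ne]
  proof (rule cINF_greatest[OF ne])
    fix m :: real assume "m \<in> \<int>"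
    then obtain i where i: "m = of_int i" by (auto elim: Ints_cases)
    show "?d \<le> dist t m"
    proof (cases "m \<le> t")
      case True
      then have "i \<le> \<lfloor>t\<rfloor>" using i by (simp add: le_floor_iff)
      then have "m \<le> of_int \<lfloor>t\<rfloor>" using i by simp
      then show ?thesis using True by (simp add: dist_real_def)
    next
      case False
      then have "\<lceil>t\<rceil> \<le> i" using i by (simp add: ceiling_le_iff)
      then have "of_int \<lceil>t\<rceil> \<le> m" using i by simp
      then show ?thesis using False by (simp add: dist_real_def)
    qed
  qed
  show ?thesis unfolding dZ_def using le ge by linarith
qed

lemma dZ_nonneg: "0 \<le> dZ t" unfolding dZ_def by (rule infdist_nonneg)

lemma dZ_le_half: "dZ t \<le> 1/2"
proof -
  have "of_int \<lceil>t\<rceil> \<le> of_int \<lfloor>t\<rfloor> + (1::real)"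
    using ceiling_diff_floor_le_1[of t] by linarith
  then show ?thesis unfolding dZ_eq by linarith
qed

lemma dZ_int: "dZ (of_int m) = 0" unfolding dZ_eq by simp

lemma dZ_half: "dZ (of_int m + 1/2) = 1/2"
proof -
  have f: "\<lfloor>(of_int m + 1/2::real)\<rfloor> = m" by linarith
  have c: "\<lceil>(of_int m + 1/2::real)\<rceil> = m + 1" by linarith
  show ?thesis unfolding dZ_eq f c by simp
qed

lemma dZ_lip: "\<bar>dZ s - dZ t\<bar> \<le> \<bar>s - t\<bar>"
  unfolding dZ_def using infdist_triangle_abs[of s \<int> t] by (simp add: dist_real_def)

lemma dZ_periodic: "dZ (t + of_int m) = dZ t"
  unfolding dZ_eq by (simp add: floor_add_int[symmetric])

lemma dZ_minus: "dZ (- t) = dZ t"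
  unfolding dZ_eq by (simp add: floor_minus ceiling_minus)

lemma continuous_dZ: "continuous_on UNIV dZ"
  unfolding dZ_def[abs_def] by (intro continuous_intros)


definition tm :: "nat \<Rightarrow> real \<Rightarrow> real" where
  "tm k y = (1/2)^k * dZ (2 ^ (k^2) * y)"

lemma f48_tm: "f48 y = (\<Sum>k. tm k y)"
  unfolding f48_def tm_def ..

lemma tm_nonneg: "0 \<le> tm k y"
  unfolding tm_def using dZ_nonneg by simp

lemma tm_le: "tm k y \<le> (1/2)^k"
proof -
  have "dZ (2 ^ (k^2) * y) \<le> 1" using dZ_le_half[of "2 ^ (k^2) * y"] by simp
  then show ?thesis unfolding tm_def by (simp add: mult_left_le)
qed

lemma summable_tm: "summable (\<lambda>k. tm k y)"
  by (rule summable_comparison_test[of _ "\<lambda>k. (1/2::real)^k"])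
     (auto simp: tm_nonneg tm_le summable_geometric)

lemma f48_split: "f48 y = (\<Sum>j<N. tm j y) + (\<Sum>i. tm (i + N) y)"
  unfolding f48_tm using suminf_split_initial_segment[OF summable_tm, of y N] by simp

lemma continuous_f48: "continuous_on UNIV f48"
proof -
  have ul: "uniform_limit UNIV (\<lambda>n x. \<Sum>i<n. tm i x) (\<lambda>x. suminf (\<lambda>i. tm i x)) sequentially"
    by (rule Weierstrass_m_test_ev[where M="\<lambda>k. (1/2)^k"])
       (auto simp: tm_nonneg tm_le summable_geometric)
  have c: "continuous_on UNIV (tm i)" for i
    unfolding tm_def[abs_def]
    by (intro continuous_intros continuous_on_compose2[OF continuous_dZ]) auto
  have "continuous_on UNIV (\<lambda>x. suminf (\<lambda>i. tm i x))"
    by (rule uniform_limit_theorem[OF _ ul]) (auto intro!: always_eventually continuous_on_sum c)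
  then show ?thesis unfolding f48_tm[abs_def] .
qed

lemma f48_even: "f48 (- y) = f48 y"
  unfolding f48_def by (simp add: dZ_minus[of "2 ^ _ * y", simplified])

lemma tm_lip: "\<bar>tm k x - tm k w\<bar> \<le> 2^(k^2) * \<bar>x - w\<bar>"
proof -
  have "\<bar>tm k x - tm k w\<bar> = (1/2)^k * \<bar>dZ (2 ^ (k^2) * x) - dZ (2 ^ (k^2) * w)\<bar>"
    unfolding tm_def by (simp add: abs_mult right_diff_distrib[symmetric])
  also have "\<dots> \<le> 1 * \<bar>2 ^ (k^2) * x - 2 ^ (k^2) * w\<bar>"
    by (rule mult_mono) (auto simp: dZ_lip power_le_one)
  also have "\<dots> = 2^(k^2) * \<bar>x - w\<bar>" by (simp add: abs_mult right_diff_distrib[symmetric])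
  finally show ?thesis .
qed

lemma sum_tm_lip: "\<bar>(\<Sum>j<N. tm j x) - (\<Sum>j<N. tm j w)\<bar> \<le> real N * 2^((N-1)^2) * \<bar>x - w\<bar>"
proof -
  have "\<bar>(\<Sum>j<N. tm j x) - (\<Sum>j<N. tm j w)\<bar> = \<bar>\<Sum>j<N. tm j x - tm j w\<bar>"
    by (simp add: sum_subtractf)
  also have "\<dots> \<le> (\<Sum>j<N. \<bar>tm j x - tm j w\<bar>)" by (rule sum_abs)
  also have "\<dots> \<le> (\<Sum>j<N. 2^((N-1)^2) * \<bar>x - w\<bar>)"
  proof (rule sum_mono)
    fix j assume "j \<in> {..<N}"
    then have "j^2 \<le> (N-1)^2" by (simp add: power_mono)
    then have "(2::real)^(j^2) \<le> 2^((N-1)^2)" by (rule power_increasing) simp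
    then show "\<bar>tm j x - tm j w\<bar> \<le> 2^((N-1)^2) * \<bar>x - w\<bar>"
      using tm_lip[of j x w] by (meson abs_ge_zero mult_right_mono order_trans)
  qed
  also have "\<dots> = real N * 2^((N-1)^2) * \<bar>x - w\<bar>" by simp
  finally show ?thesis .
qed


lemma pow_split: "N \<le> j \<Longrightarrow> (2::real)^(j^2) = 2^(N^2) * 2^(j^2 - N^2)"
proof -
  assume "N \<le> j"
  then have "N^2 \<le> j^2" by (simp add: power_mono)
  then have "j^2 = N^2 + (j^2 - N^2)" by simp
  then show ?thesis by (metis power_add)
qed

lemma tail_int:
  assumes "2^(N^2) * x = (of_int m :: real)"
  shows "(\<Sum>i. tm (i+N) x) = 0"
proof -
  have "tm (i+N) x = 0" for i
  proof -
    have "(2::real)^((i+N)^2) * x = 2^((i+N)^2 - N^2) * (2^(N^2) * x)"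
      using pow_split[of N "i+N"] by simp
    also have "\<dots> = of_int (2^((i+N)^2 - N^2) * m)" using assms by simp
    finally have "dZ ((2::real)^((i+N)^2) * x) = 0" by (simp only: dZ_int)
    then show ?thesis unfolding tm_def by simp
  qed
  then show ?thesis by simp
qed

lemma tail_half:
  assumes "2^(N^2) * x = (of_int m + 1/2 :: real)"
  shows "(\<Sum>i. tm (i+N) x) = (1/2)^N / 2"
proof -
  have s: "summable (\<lambda>i. tm (i+N) x)"
    using summable_ignore_initial_segment[OF summable_tm[of x], of N] by simp
  have "(2::real)^((Suc N)^2) = 2^(N^2) * 2^(2*N+1)"
    by (simp add: power2_eq_square power_add[symmetric] algebra_simps)
  then have "(2::real)^((Suc N)^2) * x = 2^(2*N+1) * (of_int m + 1/2)"
    using assms by (simp add: mult.assoc mult.commute)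
  also have "\<dots> = of_int (2^(2*N+1) * m + 2^(2*N))" by (simp add: algebra_simps)
  finally have t: "(\<Sum>i. tm (i + Suc N) x) = 0" by (rule tail_int)
  have "(\<Sum>i. tm (Suc i + N) x) = (\<Sum>i. tm (i+N) x) - tm (0+N) x"
    by (rule suminf_split_head[OF s])
  then have "(\<Sum>i. tm (i+N) x) = tm N x" using t by simp
  also have "\<dots> = (1/2)^N / 2" unfolding tm_def assms dZ_half by simp
  finally show ?thesis .
qed

lemma tail_shift:
  "(\<Sum>i. tm (i+N) (x + 2/2^(N^2))) = (\<Sum>i. tm (i+N) x)"
proof -
  have "tm (i+N) (x + 2/2^(N^2)) = tm (i+N) x" for i
  proof -
    have "(2::real)^((i+N)^2) * (x + 2/2^(N^2)) = 2^((i+N)^2) * x + 2 * 2^((i+N)^2 - N^2)"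
      using pow_split[of N "i+N"] by (simp add: algebra_simps)
    also have "\<dots> = 2^((i+N)^2) * x + of_int (2 * 2^((i+N)^2 - N^2))" by simp
    finally have "dZ ((2::real)^((i+N)^2) * (x + 2/2^(N^2))) = dZ (2^((i+N)^2) * x)"
      by (simp only: dZ_periodic)
    then show ?thesis unfolding tm_def by simp
  qed
  then show ?thesis by simp
qed

lemma dist_psi_le: "dist (psi g x) (psi g z) \<le> \<bar>x - z\<bar> + \<bar>g x - g z\<bar>"
  unfolding psi_def dist_Pair_Pair dist_real_def using sqrt_sum_squares_le_sum_abs[of "x-z" "g x - g z"] by simp

lemma dist_psi_ge: "\<bar>g x - g z\<bar> \<le> dist (psi g x) (psi g z)"
  using dist_snd_le[of "psi g x" "psi g z"] unfolding psi_def by (simp add: dist_real_def)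

lemma dist_psi_ge1: "\<bar>x - z\<bar> \<le> dist (psi g x) (psi g z)"
  using dist_fst_le[of "psi g x" "psi g z"] unfolding psi_def by (simp add: dist_real_def)

lemma small_k: assumes "\<delta> > 0" shows "\<exists>k. (real k + 1) / 2^k < \<delta>"
proof -
  have l1: "(\<lambda>k. real k / 2^k) \<longlonglongrightarrow> (0::real)"
    using lim_n_over_pown[of "2::real"] by simp
  have l2: "(\<lambda>k. (1/2::real)^k) \<longlonglongrightarrow> 0" by (rule LIMSEQ_realpow_zero) auto
  have "(\<lambda>k. real k / 2^k + (1/2::real)^k) \<longlonglongrightarrow> 0 + 0" by (rule tendsto_add[OF l1 l2])
  then have "(\<lambda>k. (real k + 1) / 2^k) \<longlonglongrightarrow> (0::real)"
    by (simp add: add_divide_distrib power_one_over)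
  from order_tendstoD(2)[OF this assms] obtain N where "\<forall>k\<ge>N. (real k + 1) / 2^k < \<delta>"
    unfolding eventually_sequentially by blast
  then show ?thesis by blast
qed

lemma no_M: "\<not> M_point f48 y"
proof
  assume "M_point f48 y"
  then obtain c \<epsilon> where c1: "c \<ge> 1" and e: "\<epsilon> > 0" and H: "\<forall>x\<in>{y-\<epsilon><..<y}. \<forall>z\<in>{y<..<y+\<epsilon>}.
      dist (psi f48 x) (psi f48 y) \<le> c * dist (psi f48 x) (psi f48 z)"
    unfolding M_point_def by blast
  define \<delta> where "\<delta> = min \<epsilon> (1/(2*(1+8*c)))"
  have \<delta>: "\<delta> > 0" using e c1 by (simp add: \<delta>_def)
  obtain k where hk: "(real k + 1) / 2^k < \<delta>" using small_k[OF \<delta>] by blast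
  define q where "q = (real k + 1) / 2^k"
  define n where "n = (2::real)^((Suc k)^2)"
  define p where "p = 1/n"
  define L where "L = (real k + 1) * 2^(k^2)"
  define t where "t = (1::real) / 2^(k+1)"
  define S where "S = (\<lambda>x. \<Sum>j<Suc k. tm j x)"
  have npos: "n > 0" unfolding n_def by simp
  have ppos: "p > 0" unfolding p_def using npos by simp
  have tpos: "t > 0" "t \<le> 1/2" unfolding t_def by (auto simp: field_simps)
  have n_eq: "n = 2^(k^2) * 2^(2*k+1)"
  proof -
    have e: "(Suc k)^2 = k^2 + (2*k+1)" by (simp add: power2_eq_square)
    show ?thesis unfolding n_def by (simp only: e power_add)
  qed
  have p2: "(2::real)^(2*k+1) = 2^k * 2^(k+1)"
  proof -
    have e: "2*k+1 = k + (k+1)" by simp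
    show ?thesis by (simp only: e power_add)
  qed
  have Lp: "L * p = q * t"
    unfolding L_def p_def q_def t_def n_eq p2 by (simp add: field_simps)
  have "1 * 1 \<le> L" unfolding L_def by (rule mult_mono) auto
  then have "1 \<le> L" by simp
  then have pLp: "p \<le> L * p" using ppos by simp
  have Lnn: "0 \<le> L" using \<open>1 \<le> L\<close> by simp
  define A where "A = (1/2::real)^(Suc k) / 2"
  have A_eq: "A = t / 2" unfolding A_def t_def by (simp add: power_one_over)
  have qb: "q * (1 + 8*c) < 1/2"
  proof -
    have "q < 1/(2*(1+8*c))" using hk unfolding q_def \<delta>_def by simp
    then show ?thesis using c1 by (simp add: field_simps)
  qed
  have key: "L * p * (1 + 8*c) < A"
    unfolding Lp A_eq using mult_strict_right_mono[OF qb tpos(1)] by (simp add: algebra_simps)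
  have q_le: "q \<ge> 0" unfolding q_def by simp
  have two_p: "2 * p < \<epsilon>"
  proof -
    have "2 * p \<le> 2 * (q * t)" using pLp Lp by simp
    also have "\<dots> \<le> q" using mult_left_mono[of "2*t" 1 q] tpos q_le by (simp add: algebra_simps)
    also have "q < \<epsilon>" using hk unfolding q_def \<delta>_def by simp
    finally show ?thesis .
  qed
  have lipS: "\<bar>S x - S w\<bar> \<le> L * \<bar>x - w\<bar>" for x w
    using sum_tm_lip[where N="Suc k" and x=x and w=w] unfolding S_def L_def by (simp add: add.commute)
  define a where "a = of_int (\<lceil>n*y\<rceil> - 1) / n"
  define b where "b = (of_int (\<lceil>n*y + 1/2\<rceil> - 2) + 1/2) / n"
  have na: "n * a = of_int (\<lceil>n*y\<rceil> - 1)" unfolding a_def using npos by simp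
  have nb: "n * b = of_int (\<lceil>n*y + 1/2\<rceil> - 2) + 1/2" unfolding b_def using npos by simp
  have a_b: "n*y - 1 \<le> n * a" "n * a < n * y"
    using ceiling_correct[of "n*y"] unfolding na by linarith+
  have b_b: "n*y - 1 \<le> n * b" "n * b < n * y"
    using ceiling_correct[of "n*y + 1/2"] unfolding nb by linarith+
  have ab_loc: "y - p \<le> x \<and> x < y" if "n*y - 1 \<le> n * x" "n * x < n * y" for x
  proof -
    have "x < y" using that npos by simp
    moreover have "y - 1/n \<le> x" using that npos by (simp add: field_simps)
    ultimately show ?thesis unfolding p_def by simp
  qed
  have aloc: "y - p \<le> a \<and> a < y" using ab_loc a_b by blast
  have bloc: "y - p \<le> b \<and> b < y" using ab_loc b_b by blast
  have ta: "(\<Sum>i. tm (i + Suc k) a) = 0"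
    by (rule tail_int[of _ _ "\<lceil>n*y\<rceil> - 1"]) (use na in \<open>simp add: n_def\<close>)
  have fa: "f48 a = S a"
    using f48_split[of a "Suc k"] ta unfolding S_def by simp
  have tb: "(\<Sum>i. tm (i + Suc k) b) = A"
    unfolding A_def
    by (rule tail_half[of _ _ "\<lceil>n*y + 1/2\<rceil> - 2"]) (use nb in \<open>simp add: n_def\<close>)
  have fb: "f48 b = S b + A"
    using f48_split[of b "Suc k"] tb unfolding S_def by simp
  have shift: "f48 (x + 2*p) - f48 x = S (x + 2*p) - S x" for x
  proof -
    have "x + 2*p = x + 2/2^((Suc k)^2)" unfolding p_def n_def by simp
    then show ?thesis
      using f48_split[of x "Suc k"] f48_split[of "x + 2*p" "Suc k"] tail_shift[of "Suc k" x]
      unfolding S_def by simp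
  qed
  have close: "\<bar>f48 x - f48 y\<bar> \<le> 4 * c * (L * p)" if "y - p \<le> x \<and> x < y" for x
  proof -
    have xin: "x \<in> {y-\<epsilon><..<y}" using that two_p ppos by auto
    have zin: "x + 2*p \<in> {y<..<y+\<epsilon>}" using that two_p ppos by auto
    have "\<bar>f48 x - f48 y\<bar> \<le> dist (psi f48 x) (psi f48 y)" by (rule dist_psi_ge)
    also have "\<dots> \<le> c * dist (psi f48 x) (psi f48 (x + 2*p))" using H xin zin by blast
    also have "\<dots> \<le> c * (\<bar>x - (x + 2*p)\<bar> + \<bar>f48 x - f48 (x + 2*p)\<bar>)"
      using c1 dist_psi_le[of f48 x "x + 2*p"] by (intro mult_left_mono) auto
    also have "\<bar>f48 x - f48 (x + 2*p)\<bar> \<le> L * (2*p)"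
      using lipS[of "x + 2*p" x] shift[of x] ppos by (simp add: abs_minus_commute)
    then have "c * (\<bar>x - (x + 2*p)\<bar> + \<bar>f48 x - f48 (x + 2*p)\<bar>) \<le> c * (2*p + L*(2*p))"
      using c1 ppos by (intro mult_left_mono) auto
    also have "\<dots> \<le> c * (4 * (L * p))" using pLp c1 by (intro mult_left_mono) auto
    finally show ?thesis by simp
  qed
  have "\<bar>f48 b - f48 a\<bar> \<le> 8 * c * (L * p)"
    using close[OF aloc] close[OF bloc] by linarith
  moreover have "\<bar>S b - S a\<bar> \<le> L * p"
  proof -
    have "\<bar>b - a\<bar> \<le> p" using aloc bloc by linarith
    then have "L * \<bar>b - a\<bar> \<le> L * p" using Lnn by (rule mult_left_mono)
    then show ?thesis using lipS[of b a] by linarith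
  qed
  ultimately have "A \<le> L * p * (1 + 8*c)" unfolding fa fb by (simp add: algebra_simps; linarith)
  then show False using key by linarith
qed

lemma psi_cont_at:
  assumes cont: "continuous_on UNIV g" and pos: "e > 0"
  shows "\<exists>\<eta>>0. \<forall>t. \<bar>t - s\<bar> < \<eta> \<longrightarrow> dist (psi g t) (psi g s) < e"
proof -
  have "isCont g s" using cont by (simp add: continuous_on_eq_continuous_at)
  then obtain d where d: "d > 0" "\<forall>t. dist t s < d \<longrightarrow> dist (g t) (g s) < e/2"
    unfolding continuous_at_eps_delta using pos by (metis half_gt_zero)
  define \<eta> where "\<eta> = min d (e/2)"
  have "\<forall>t. \<bar>t - s\<bar> < \<eta> \<longrightarrow> dist (psi g t) (psi g s) < e"
  proof (intro allI impI)
    fix t assume t: "\<bar>t - s\<bar> < \<eta>"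
    then have "\<bar>g t - g s\<bar> < e/2" using d unfolding \<eta>_def dist_real_def by simp
    moreover have "\<bar>t - s\<bar> < e/2" using t unfolding \<eta>_def by simp
    ultimately show "dist (psi g t) (psi g s) < e" using dist_psi_le[of g t s] by linarith
  qed
  moreover have "\<eta> > 0" unfolding \<eta>_def using d pos by simp
  ultimately show ?thesis by blast
qed

lemma tri_contra: "\<bar>t - u\<bar> < \<bar>s - u\<bar> / 2 \<Longrightarrow> \<bar>t - s\<bar> < \<bar>s - u\<bar> / 2 \<Longrightarrow> False"
  for t u s :: real by (simp add: abs_if split: if_splits)

lemma gap:
  assumes cont: "continuous_on UNIV g" and Kpos: "K > 0"
    and sep: "\<And>p q. p \<in> Q1 \<Longrightarrow> q \<in> Q2 \<Longrightarrow>
        \<bar>p - u\<bar> \<le> K * dist (psi g p) (psi g q) \<and> \<bar>q - u\<bar> \<le> K * dist (psi g p) (psi g q)"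
    and aQ: "a \<in> Q1" and bQ: "b \<in> Q2" and ab: "a < b" and u: "u \<notin> {a..b}"
    and cover: "\<And>t. t \<in> P \<Longrightarrow> a \<le> t \<Longrightarrow> t \<le> b \<Longrightarrow> t \<in> Q1 \<or> t \<in> Q2"
  shows "\<exists>\<alpha> \<beta>. a \<le> \<alpha> \<and> \<alpha> < \<beta> \<and> \<beta> \<le> b \<and> (\<forall>t\<in>P. \<not> (\<alpha> < t \<and> t < \<beta>))"
proof -
  define T where "T = Q1 \<inter> {a..b}"
  define s where "s = Sup T"
  have Tne: "T \<noteq> {}" using aQ ab unfolding T_def by auto
  have Tbdd: "bdd_above T" unfolding T_def by (rule bdd_aboveI[of _ b]) auto
  have sup: "x \<le> s" if "x \<in> T" for x unfolding s_def by (rule cSup_upper[OF that Tbdd])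
  have as: "a \<le> s" using sup aQ ab unfolding T_def by auto
  have sb: "s \<le> b" unfolding s_def by (rule cSup_least[OF Tne]) (auto simp: T_def)
  define e where "e = \<bar>s - u\<bar>"
  have epos: "e > 0" using as sb u unfolding e_def by auto
  obtain \<eta>0 where eta0: "\<eta>0 > 0" "\<forall>t. \<bar>t - s\<bar> < \<eta>0 \<longrightarrow> dist (psi g t) (psi g s) < e/(4*K)"
    using psi_cont_at[OF cont, of "e/(4*K)" s] epos Kpos by auto
  define \<eta> where "\<eta> = min \<eta>0 (e/2)"
  have eta: "\<eta> > 0" unfolding \<eta>_def using eta0 epos by simp
  have close: "dist (psi g t) (psi g s) < e/(4*K)" if "\<bar>t - s\<bar> < \<eta>" for t
    using eta0 that unfolding \<eta>_def by simp
  obtain a1 where a1: "a1 \<in> T" "s - \<eta> < a1"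
    using less_cSup_iff[OF Tne Tbdd, of "s - \<eta>"] eta unfolding s_def[symmetric] by auto
  have a1s: "a1 \<le> s" using sup a1 by simp
  have a1Q: "a1 \<in> Q1" using a1 unfolding T_def by simp
  have d1: "dist (psi g a1) (psi g s) < e/(4*K)" using close[of a1] a1 a1s by simp
  have Ke: "K * (e/(4*K)) = e/4" using Kpos by simp
  have "s \<noteq> b"
  proof
    assume sb': "s = b"
    have "e \<le> K * dist (psi g a1) (psi g b)" using sep[OF a1Q bQ] unfolding e_def sb' by simp
    also have "\<dots> < K * (e/(4*K))"
    proof -
      have "dist (psi g a1) (psi g b) < e/(4*K)" using d1 sb' by simp
      then show ?thesis by (rule mult_strict_left_mono[OF _ Kpos])
    qed
    finally show False using Ke epos by simp
  qed
  then have sb2: "s < b" using sb by simp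
  define \<beta> where "\<beta> = min (s + \<eta>) b"
  have "\<forall>t\<in>P. \<not> (s < t \<and> t < \<beta>)"
  proof (intro ballI notI)
    fix t assume tP: "t \<in> P" and st: "s < t \<and> t < \<beta>"
    then have tab: "a \<le> t" "t \<le> b" using as unfolding \<beta>_def by auto
    have "t \<notin> Q1"
    proof
      assume "t \<in> Q1"
      then have "t \<in> T" using tab unfolding T_def by simp
      then show False using sup st by fastforce
    qed
    then have tQ: "t \<in> Q2" using cover[OF tP tab] by simp
    have ts: "\<bar>t - s\<bar> < \<eta>" using st unfolding \<beta>_def by simp
    have "dist (psi g a1) (psi g t) \<le> dist (psi g a1) (psi g s) + dist (psi g s) (psi g t)"
      by (rule dist_triangle)
    also have "\<dots> < e/(4*K) + e/(4*K)"
      using d1 close[OF ts] by (simp add: dist_commute)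
    finally have d2: "dist (psi g a1) (psi g t) < e/(2*K)" by simp
    have "\<bar>t - u\<bar> \<le> K * dist (psi g a1) (psi g t)" using sep[OF a1Q tQ] by simp
    also have "\<dots> < K * (e/(2*K))" by (rule mult_strict_left_mono[OF d2 Kpos])
    also have "\<dots> = e/2" using Kpos by simp
    finally have "\<bar>t - u\<bar> < e/2" .
    moreover have "\<bar>t - s\<bar> < e/2" using ts unfolding \<eta>_def by simp
    ultimately show False unfolding e_def by (rule tri_contra)
  qed
  moreover have "s < \<beta>" unfolding \<beta>_def using sb2 eta by simp
  moreover have "\<beta> \<le> b" unfolding \<beta>_def by simp
  ultimately show ?thesis using as by blast
qed

lemma sep_nowhere:
  fixes M :: "real set"
  assumes e: "e > 0" and sep: "\<And>u v. u \<in> M \<Longrightarrow> v \<in> M \<Longrightarrow> u \<noteq> v \<Longrightarrow> e \<le> \<bar>u - v\<bar>"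
  shows "interior (closure M) = {}"
proof (rule ccontr)
  assume "interior (closure M) \<noteq> {}"
  then obtain t where t: "t \<in> interior (closure M)" by blast
  obtain r where r0: "r > 0" "ball t r \<subseteq> interior (closure M)"
    using t open_contains_ball[of "interior (closure M)"] by auto
  have r: "r > 0" "ball t r \<subseteq> closure M" using r0 interior_subset by auto
  define \<rho> where "\<rho> = min r e / 4"
  have rho: "\<rho> > 0" unfolding \<rho>_def using r e by simp
  have tc: "t \<in> closure M" using t interior_subset by blast
  obtain m1 where m1: "m1 \<in> M" "dist m1 t < \<rho>" using tc rho closure_approachable by blast
  define w where "w = m1 + \<rho>"
  have rr: "\<rho> \<le> r/4" "\<rho> \<le> e/4" unfolding \<rho>_def by auto
  have "\<bar>(m1 - t) + \<rho>\<bar> \<le> \<bar>m1 - t\<bar> + \<bar>\<rho>\<bar>" by (rule abs_triangle_ineq)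
  then have "dist w t < r"
    using m1 rr rho unfolding w_def dist_real_def by (simp add: algebra_simps)
  then have "w \<in> closure M" using r by (auto simp: dist_commute)
  then obtain m2 where m2: "m2 \<in> M" "dist m2 w < \<rho>" using rho closure_approachable by blast
  have "\<bar>(m2 - w) + \<rho>\<bar> \<le> \<bar>m2 - w\<bar> + \<bar>\<rho>\<bar>" by (rule abs_triangle_ineq)
  then have "\<bar>m2 - m1\<bar> < e"
    using m2 rr rho e unfolding w_def dist_real_def by (simp add: algebra_simps)
  then have "m2 = m1" using sep[OF m2(1) m1(1)] by force
  then show False using m2 unfolding w_def dist_real_def by simp
qed

lemma boundary_nowhere:
  fixes P :: "real set"
  shows "interior (closure (P - interior (closure P))) = {}"
proof (rule ccontr)
  let ?M = "P - interior (closure P)"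
  assume "interior (closure ?M) \<noteq> {}"
  then obtain t where t: "t \<in> interior (closure ?M)" by blast
  define Oi where "Oi = interior (closure ?M)"
  have Oo: "open Oi" unfolding Oi_def by simp
  have "closure ?M \<subseteq> closure P" by (rule closure_mono) auto
  then have OP: "Oi \<subseteq> interior (closure P)" unfolding Oi_def by (rule interior_mono)
  have "t \<in> Oi \<inter> closure ?M" using t interior_subset unfolding Oi_def by blast
  then have "Oi \<inter> ?M \<noteq> {}" using open_Int_closure_eq_empty[OF Oo, of ?M] by blast
  then show False using OP by blast
qed

lemma transfer_nowhere:
  assumes cont: "continuous_on UNIV g" and M: "interior (closure M) = {}"
  shows "nowhere_dense_in (subtopology euclidean (range (psi g))) (psi g ` M)"
proof -
  let ?X = "subtopology euclidean (range (psi g))"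
  have top: "topspace ?X = range (psi g)" by simp
  have cpsi: "continuous_on UNIV (psi g)"
    unfolding psi_def[abs_def] by (intro continuous_intros cont)
  have hm: "homeomorphic_maps euclideanreal ?X (psi g) fst"
    unfolding homeomorphic_maps_def
  proof (intro conjI)
    show "continuous_map euclideanreal ?X (psi g)"
      by (simp add: continuous_map_in_subtopology cpsi)
    show "continuous_map ?X euclideanreal fst"
      by (simp add: continuous_map_iff_continuous continuous_on_fst)
    show "\<forall>x\<in>topspace euclideanreal. fst (psi g x) = x" by (simp add: psi_def)
    show "\<forall>y\<in>topspace ?X. psi g (fst y) = y" by (auto simp: psi_def)
  qed
  then have h: "homeomorphic_map euclideanreal ?X (psi g)"
    using homeomorphic_map_maps by blast
  have "?X closure_of (psi g ` M) = psi g ` (euclideanreal closure_of M)"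
    by (rule homeomorphic_map_closure_of[OF h]) simp
  also have "\<dots> = psi g ` closure M" by (simp add: euclidean_closure_of)
  finally have c: "?X closure_of (psi g ` M) = psi g ` closure M" .
  have "?X interior_of (psi g ` closure M) = psi g ` (euclideanreal interior_of closure M)"
    by (rule homeomorphic_map_interior_of[OF h]) simp
  also have "\<dots> = {}" using M by (simp add: euclidean_interior_of)
  finally have i: "?X interior_of (?X closure_of (psi g ` M)) = {}" unfolding c .
  have sub: "psi g ` M \<subseteq> topspace ?X" by auto
  show ?thesis unfolding nowhere_dense_in_def using i sub by blast
qed

lemma dist_psi_mono:
  assumes "\<bar>x - y\<bar> \<le> \<bar>x - z\<bar>" "\<bar>g x - g y\<bar> \<le> \<bar>g x - g z\<bar>"
  shows "dist (psi g x) (psi g y) \<le> dist (psi g x) (psi g z)"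
proof -
  have "(x - y)^2 \<le> (x - z)^2" using assms(1) by (simp add: abs_le_square_iff)
  moreover have "(g x - g y)^2 \<le> (g x - g z)^2" using assms(2) by (simp add: abs_le_square_iff)
  ultimately show ?thesis unfolding psi_def dist_Pair_Pair dist_real_def
    by (intro real_sqrt_le_mono) simp
qed

lemma ev_at0:
  assumes "eventually P (at (0::real))"
  obtains d where "d > 0" "\<And>h. h \<noteq> 0 \<Longrightarrow> \<bar>h\<bar> < d \<Longrightarrow> P h"
  using assms unfolding eventually_at by (auto simp: dist_real_def)

lemma deriv_M:
  assumes "(g has_real_derivative D) (at x)"
  shows "M_point g x"
proof -
  have "((\<lambda>h. (g (x + h) - g x) / h) \<longlongrightarrow> D) (at 0)" using assms by (simp add: DERIV_def)
  then have "eventually (\<lambda>h. dist ((g (x + h) - g x) / h) D < 1) (at 0)"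
    by (rule tendstoD) simp
  then obtain d where d: "d > 0" "\<And>h. h \<noteq> 0 \<Longrightarrow> \<bar>h\<bar> < d \<Longrightarrow> \<bar>(g (x + h) - g x) / h - D\<bar> < 1"
    by (rule ev_at0) (auto simp: dist_real_def)
  have "\<forall>y\<in>{x-d<..<x}. \<forall>z\<in>{x<..<x+d}.
      dist (psi g y) (psi g x) \<le> (\<bar>D\<bar> + 2) * dist (psi g y) (psi g z)"
  proof (intro ballI)
    fix y z assume y: "y \<in> {x-d<..<x}" and z: "z \<in> {x<..<x+d}"
    define h where "h = y - x"
    have h: "h \<noteq> 0" "\<bar>h\<bar> < d" using y unfolding h_def by auto
    have "\<bar>(g (x + h) - g x) / h\<bar> < \<bar>D\<bar> + 1" using d(2)[OF h] by linarith
    then have "\<bar>g (x + h) - g x\<bar> / \<bar>h\<bar> \<le> \<bar>D\<bar> + 1" by (simp add: abs_divide)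
    then have "\<bar>g y - g x\<bar> \<le> (\<bar>D\<bar> + 1) * \<bar>y - x\<bar>"
      using h unfolding h_def by (simp add: divide_le_eq)
    then have "dist (psi g y) (psi g x) \<le> (\<bar>D\<bar> + 2) * \<bar>y - x\<bar>"
      using dist_psi_le[of g y x] by (simp add: algebra_simps)
    also have "\<dots> \<le> (\<bar>D\<bar> + 2) * \<bar>y - z\<bar>" using y z by (intro mult_left_mono) auto
    also have "\<dots> \<le> (\<bar>D\<bar> + 2) * dist (psi g y) (psi g z)"
      using dist_psi_ge1[of y z g] by (intro mult_left_mono) auto
    finally show "dist (psi g y) (psi g x) \<le> (\<bar>D\<bar> + 2) * dist (psi g y) (psi g z)" .
  qed
  then show ?thesis unfolding M_point_def using d(1)
    by (intro exI[of _ "\<bar>D\<bar> + 2"] conjI exI[of _ d]) auto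
qed

lemma sign_M:
  assumes d: "d > 0" and sg: "\<And>h. h \<noteq> 0 \<Longrightarrow> \<bar>h\<bar> < d \<Longrightarrow> 0 < \<sigma> * ((g (x + h) - g x) / h)"
    and s: "\<sigma> = 1 \<or> \<sigma> = -1"
  shows "M_point g x"
proof -
  have "\<forall>y\<in>{x-d<..<x}. \<forall>z\<in>{x<..<x+d}. dist (psi g y) (psi g x) \<le> 1 * dist (psi g y) (psi g z)"
  proof (intro ballI)
    fix y z assume y: "y \<in> {x-d<..<x}" and z: "z \<in> {x<..<x+d}"
    have qy: "0 < \<sigma> * ((g y - g x) / (y - x))" using sg[of "y - x"] y by auto
    have qz: "0 < \<sigma> * ((g z - g x) / (z - x))" using sg[of "z - x"] z by auto
    have yx: "y - x < 0" and zx: "z - x > 0" using y z by auto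
    have "\<sigma> * (g y - g x) < 0"
      using qy yx by (simp add: zero_less_mult_iff zero_less_divide_iff mult_less_0_iff)
    moreover have "\<sigma> * (g z - g x) > 0"
      using qz zx by (simp add: zero_less_mult_iff zero_less_divide_iff)
    ultimately have "\<bar>g y - g x\<bar> \<le> \<bar>g y - g z\<bar>" using s by auto
    moreover have "\<bar>y - x\<bar> \<le> \<bar>y - z\<bar>" using y z by auto
    ultimately show "dist (psi g y) (psi g x) \<le> 1 * dist (psi g y) (psi g z)"
      using dist_psi_mono[of y x z g] by (simp add: abs_minus_commute)
  qed
  then show ?thesis unfolding M_point_def using d by (intro exI[of _ 1] conjI exI[of _ d]) auto
qed

lemma top_M:
  assumes "filterlim (\<lambda>h. (g (x + h) - g x) / h) at_top (at 0)"
  shows "M_point g x"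
proof -
  have "eventually (\<lambda>h. 1 \<le> (g (x + h) - g x) / h) (at 0)"
    using assms unfolding filterlim_at_top by blast
  then obtain d where d: "d > 0" "\<And>h. h \<noteq> 0 \<Longrightarrow> \<bar>h\<bar> < d \<Longrightarrow> 1 \<le> (g (x + h) - g x) / h"
    by (rule ev_at0) blast
  have "0 < 1 * ((g (x + h) - g x) / h)" if "h \<noteq> 0" "\<bar>h\<bar> < d" for h
    using d(2)[OF that] by linarith
  then show ?thesis by (rule sign_M[OF d(1)]) auto
qed

lemma bot_M:
  assumes "filterlim (\<lambda>h. (g (x + h) - g x) / h) at_bot (at 0)"
  shows "M_point g x"
proof -
  have "eventually (\<lambda>h. (g (x + h) - g x) / h \<le> -1) (at 0)"
    using assms unfolding filterlim_at_bot by blast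
  then obtain d where d: "d > 0" "\<And>h. h \<noteq> 0 \<Longrightarrow> \<bar>h\<bar> < d \<Longrightarrow> (g (x + h) - g x) / h \<le> -1"
    by (rule ev_at0) blast
  have "0 < -1 * ((g (x + h) - g x) / h)" if "h \<noteq> 0" "\<bar>h\<bar> < d" for h
    using d(2)[OF that] by linarith
  then show ?thesis by (rule sign_M[OF d(1)]) auto
qed

lemma extend:
  assumes cont: "continuous_on UNIV g" and A: "open A" "A \<subseteq> closure P"
    and B: "open B" "B \<subseteq> closure P"
    and H: "\<And>x z. x \<in> P \<Longrightarrow> x \<in> A \<Longrightarrow> z \<in> P \<Longrightarrow> z \<in> B \<Longrightarrow>
          dist (psi g x) (psi g u) \<le> c * dist (psi g x) (psi g z)"
    and x: "x \<in> A" and z: "z \<in> B"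
  shows "dist (psi g x) (psi g u) \<le> c * dist (psi g x) (psi g z)"
proof -
  have cpsi: "continuous_on UNIV (psi g)"
    unfolding psi_def[abs_def] by (intro continuous_intros cont)
  have cd: "continuous_on UNIV (\<lambda>x. dist (psi g x) (psi g w))" for w
    by (intro continuous_intros cpsi)
  have cd2: "continuous_on UNIV (\<lambda>w. dist (psi g x) (psi g w))" for x
    by (intro continuous_intros cpsi)
  have clA: "A \<subseteq> closure (P \<inter> A)"
    using open_Int_closure_subset[OF A(1), of P] A(2) by (auto simp: Int_commute)
  have clB: "B \<subseteq> closure (P \<inter> B)"
    using open_Int_closure_subset[OF B(1), of P] B(2) by (auto simp: Int_commute)
  have step1: "0 \<le> c * dist (psi g x') (psi g z') - dist (psi g x') (psi g u)"
    if x': "x' \<in> A" and z': "z' \<in> P" "z' \<in> B" for x' z'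
  proof (rule continuous_ge_on_closure[where S="P \<inter> A" and f="\<lambda>x. c * dist (psi g x) (psi g z') - dist (psi g x) (psi g u)"])
    show "continuous_on (closure (P \<inter> A)) (\<lambda>x. c * dist (psi g x) (psi g z') - dist (psi g x) (psi g u))"
      by (rule continuous_on_subset[of UNIV]) (intro continuous_intros cd, simp)
    show "x' \<in> closure (P \<inter> A)" using clA x' by blast
    show "0 \<le> c * dist (psi g y) (psi g z') - dist (psi g y) (psi g u)" if "y \<in> P \<inter> A" for y
      using H[of y z'] that z' by simp
  qed
  have "0 \<le> c * dist (psi g x) (psi g z) - dist (psi g x) (psi g u)"
  proof (rule continuous_ge_on_closure[where S="P \<inter> B" and f="\<lambda>z. c * dist (psi g x) (psi g z) - dist (psi g x) (psi g u)"])
    show "continuous_on (closure (P \<inter> B)) (\<lambda>z. c * dist (psi g x) (psi g z) - dist (psi g x) (psi g u))"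
      by (rule continuous_on_subset[of UNIV]) (intro continuous_intros cd2, simp)
    show "z \<in> closure (P \<inter> B)" using clB z by blast
    show "0 \<le> c * dist (psi g x) (psi g y) - dist (psi g x) (psi g u)" if "y \<in> P \<inter> B" for y
      using step1[of x y] that x by simp
  qed
  then show ?thesis by simp
qed

lemma dist_psi_neg:
  assumes even: "\<And>t. g (- t) = g t"
  shows "dist (psi g (- a)) (psi g (- b)) = dist (psi g a) (psi g b)"
  unfolding psi_def dist_Pair_Pair dist_real_def using even by (simp add: abs_minus_commute)


lemma meager_main:
  assumes cont: "continuous_on UNIV g" and even: "\<And>t. g (- t) = g t"
    and noM: "\<And>y. \<not> M_point g y"
    and SG: "S \<subseteq> range (psi g)" and mono: "monotone_metric S"
  shows "meager_in (subtopology euclidean (range (psi g))) S"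
proof -
  obtain r c where slo: "strict_linear_order_on S r" and cpos: "c > 0"
    and Hm: "\<forall>x\<in>S. \<forall>y\<in>S. \<forall>z\<in>S. (x,y) \<in> r \<and> (y,z) \<in> r \<longrightarrow> dist x y \<le> c * dist x z"
    using mono unfolding monotone_metric_def by blast
  define P where "P = {t. psi g t \<in> S}"
  define lt where "lt = (\<lambda>a b. (psi g a, psi g b) \<in> r)"
  have tr: "trans r" and irr: "irrefl r" and tot: "total_on S r"
    using slo unfolding strict_linear_order_on_def by auto
  have psi_inj: "a = b" if "psi g a = psi g b" for a b using that by (simp add: psi_def)
  have totP: "lt a b \<or> lt b a" if "a \<in> P" "b \<in> P" "a \<noteq> b" for a b
  proof -
    have "psi g a \<noteq> psi g b" using that psi_inj by blast
    then show ?thesis using tot that unfolding total_on_def lt_def P_def by blast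
  qed
  have asym: False if "lt a b" "lt b a" for a b
  proof -
    have "(psi g a, psi g a) \<in> r" using tr that unfolding lt_def trans_def by blast
    then show False using irr unfolding irrefl_def by blast
  qed
  have mon: "dist (psi g a) (psi g b) \<le> c * dist (psi g a) (psi g d)"
    if "a \<in> P" "b \<in> P" "d \<in> P" "lt a b" "lt b d" for a b d
    using Hm that unfolding P_def lt_def by blast
  define K where "K = c + 1"
  have Kpos: "K > 0" unfolding K_def using cpos by simp
  have sepL: "\<bar>p - u\<bar> \<le> K * dist (psi g p) (psi g q) \<and> \<bar>q - u\<bar> \<le> K * dist (psi g p) (psi g q)"
    if "p \<in> P" "q \<in> P" "u \<in> P" "lt p u" "lt u q" for p q u
  proof -
    have m: "dist (psi g p) (psi g u) \<le> c * dist (psi g p) (psi g q)" using mon that by blast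
    have d0: "0 \<le> dist (psi g p) (psi g q)" by simp
    have "\<bar>p - u\<bar> \<le> dist (psi g p) (psi g u)" by (rule dist_psi_ge1)
    also have "\<dots> \<le> K * dist (psi g p) (psi g q)" unfolding K_def distrib_right mult_1 using m d0 by linarith
    finally have 1: "\<bar>p - u\<bar> \<le> K * dist (psi g p) (psi g q)" .
    have "\<bar>q - u\<bar> \<le> dist (psi g u) (psi g q)" using dist_psi_ge1[of u q g] by (simp add: abs_minus_commute)
    also have "\<dots> \<le> dist (psi g u) (psi g p) + dist (psi g p) (psi g q)" by (rule dist_triangle)
    also have "\<dots> \<le> K * dist (psi g p) (psi g q)" unfolding K_def distrib_right mult_1 using m d0 by (simp add: dist_commute)
    finally show ?thesis using 1 by simp
  qed
  have homog: False
    if I: "{l<..<h} \<subseteq> closure P" "u \<notin> {l<..<h}" and uP: "u \<in> P"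
      and ab: "a \<in> P" "b \<in> P" "a \<in> {l<..<h}" "b \<in> {l<..<h}" and lts: "lt a u" "lt u b" for l h u a b
  proof -
    have ne: "a \<noteq> b" using lts asym by blast
    have noempty: False if "\<alpha> < \<beta>" "{\<alpha><..<\<beta>} \<subseteq> {l<..<h}" "\<forall>t\<in>P. \<not> (\<alpha> < t \<and> t < \<beta>)" for \<alpha> \<beta>
    proof -
      have m: "(\<alpha>+\<beta>)/2 \<in> {\<alpha><..<\<beta>}" using that(1) by auto
      have "{\<alpha><..<\<beta>} \<inter> closure P \<noteq> {}" using m that(2) I(1) by blast
      then have "{\<alpha><..<\<beta>} \<inter> P \<noteq> {}" using open_Int_closure_eq_empty[of "{\<alpha><..<\<beta>}" P] by auto
      then show False using that(3) by auto
    qed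
    have cover: "t \<in> {p\<in>P. lt p u} \<or> t \<in> {q\<in>P. lt u q}" if "t \<in> P" "min a b \<le> t" "t \<le> max a b" for t
    proof -
      have "t \<in> {l<..<h}" using that ab by auto
      then have "t \<noteq> u" using I(2) by auto
      then show ?thesis using totP[OF that(1) uP] that(1) by blast
    qed
    have uab: "u \<notin> {min a b..max a b}" using I(2) ab by auto
    show False
    proof (cases "a < b")
      case True
      obtain \<alpha> \<beta> where g: "a \<le> \<alpha>" "\<alpha> < \<beta>" "\<beta> \<le> b" "\<forall>t\<in>P. \<not> (\<alpha> < t \<and> t < \<beta>)"
        using gap[OF cont Kpos, of "{p\<in>P. lt p u}" "{q\<in>P. lt u q}" u a b P]
          sepL uP ab lts True uab cover by (auto simp: min_def max_def split: if_splits)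
      moreover have "{\<alpha><..<\<beta>} \<subseteq> {l<..<h}" using g ab by auto
      ultimately show False using noempty[of \<alpha> \<beta>] by blast
    next
      case False
      then have ba: "b < a" using ne by simp
      obtain \<alpha> \<beta> where g: "b \<le> \<alpha>" "\<alpha> < \<beta>" "\<beta> \<le> a" "\<forall>t\<in>P. \<not> (\<alpha> < t \<and> t < \<beta>)"
      proof (rule exE[OF gap[OF cont Kpos, of "{q\<in>P. lt u q}" "{p\<in>P. lt p u}" u b a P]], goal_cases)
        case (1 p q)
        then show ?case using sepL[of q p u] uP by (auto simp: dist_commute)
      next
        case 2 then show ?case using ab lts by auto
      next
        case 3 then show ?case using ab lts by auto
      next
        case 4 show ?case by (rule ba)
      next
        case 5 then show ?case using uab ba by (auto simp: min_def max_def)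
      next
        case (6 t) then show ?case using cover[of t] ba by (auto simp: min_def max_def)
      next
        case (7 \<alpha>) then show ?case by blast
      qed
      moreover have "{\<alpha><..<\<beta>} \<subseteq> {l<..<h}" using g ab by auto
      ultimately show False using noempty[of \<alpha> \<beta>] by blast
    qed
  qed
  define C where "C = (\<lambda>n::nat. {u\<in>P. \<forall>v\<in>P. v \<noteq> u \<and> \<bar>v - u\<bar> < 1 / real (Suc n) \<longrightarrow> lt v u})"
  define Dd where "Dd = (\<lambda>n::nat. {u\<in>P. \<forall>v\<in>P. v \<noteq> u \<and> \<bar>v - u\<bar> < 1 / real (Suc n) \<longrightarrow> lt u v})"
  define K0 where "K0 = P - interior (closure P)"
  have coverP: "P \<subseteq> K0 \<union> (\<Union>n. C n) \<union> (\<Union>n. Dd n)"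
  proof
    fix u assume uP: "u \<in> P"
    show "u \<in> K0 \<union> (\<Union>n. C n) \<union> (\<Union>n. Dd n)"
    proof (cases "u \<in> interior (closure P)")
      case False then show ?thesis using uP unfolding K0_def by blast
    next
      case True
      obtain \<delta> where \<delta>0: "\<delta> > 0" "ball u \<delta> \<subseteq> interior (closure P)"
        using True open_contains_ball[of "interior (closure P)"] by auto
      have \<delta>: "ball u \<delta> \<subseteq> closure P" using \<delta>0(2) interior_subset by blast
      have Lc: "{u-\<delta><..<u} \<subseteq> closure P"
      proof -
        have "{u-\<delta><..<u} \<subseteq> ball u \<delta>" by (auto simp: ball_def dist_real_def)
        then show ?thesis using \<delta> by blast
      qed
      have Rc: "{u<..<u+\<delta>} \<subseteq> closure P"
      proof -
        have "{u<..<u+\<delta>} \<subseteq> ball u \<delta>" by (auto simp: ball_def dist_real_def)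
        then show ?thesis using \<delta> by blast
      qed
      have hR: "(\<forall>a\<in>P. a \<in> {u<..<u+\<delta>} \<longrightarrow> lt a u) \<or> (\<forall>a\<in>P. a \<in> {u<..<u+\<delta>} \<longrightarrow> lt u a)"
      proof (rule ccontr)
        assume "\<not> ?thesis"
        then obtain a b where a: "a\<in>P" "a \<in> {u<..<u+\<delta>}" "\<not> lt a u"
          and b: "b\<in>P" "b \<in> {u<..<u+\<delta>}" "\<not> lt u b" by blast
        have la: "lt u a" using totP[OF uP a(1)] a by auto
        have lb: "lt b u" using totP[OF b(1) uP] b by auto
        show False by (rule homog[OF Rc _ uP b(1) a(1) b(2) a(2) lb la]) simp
      qed
      have hL: "(\<forall>a\<in>P. a \<in> {u-\<delta><..<u} \<longrightarrow> lt a u) \<or> (\<forall>a\<in>P. a \<in> {u-\<delta><..<u} \<longrightarrow> lt u a)"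
      proof (rule ccontr)
        assume "\<not> ?thesis"
        then obtain a b where a: "a\<in>P" "a \<in> {u-\<delta><..<u}" "\<not> lt a u"
          and b: "b\<in>P" "b \<in> {u-\<delta><..<u}" "\<not> lt u b" by blast
        have la: "lt u a" using totP[OF uP a(1)] a by auto
        have lb: "lt b u" using totP[OF b(1) uP] b by auto
        show False by (rule homog[OF Lc _ uP b(1) a(1) b(2) a(2) lb la]) simp
      qed
      obtain n where n: "inverse (real (Suc n)) < \<delta>" using reals_Archimedean[OF \<delta>0(1)] by blast
      have side: "v \<in> {u-\<delta><..<u} \<or> v \<in> {u<..<u+\<delta>}" if "v \<noteq> u" "\<bar>v - u\<bar> < 1 / real (Suc n)" for v
        using that n by (auto simp: inverse_eq_divide abs_if split: if_splits)
      from hL hR show ?thesis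
      proof (elim disjE)
        assume L: "\<forall>a\<in>P. a \<in> {u-\<delta><..<u} \<longrightarrow> lt a u" and R: "\<forall>a\<in>P. a \<in> {u<..<u+\<delta>} \<longrightarrow> lt a u"
        have "u \<in> C n" unfolding C_def using uP L R side by blast
        then show ?thesis by blast
      next
        assume L: "\<forall>a\<in>P. a \<in> {u-\<delta><..<u} \<longrightarrow> lt u a" and R: "\<forall>a\<in>P. a \<in> {u<..<u+\<delta>} \<longrightarrow> lt u a"
        have "u \<in> Dd n" unfolding Dd_def using uP L R side by blast
        then show ?thesis by blast
      next
        assume L: "\<forall>a\<in>P. a \<in> {u-\<delta><..<u} \<longrightarrow> lt a u" and R: "\<forall>a\<in>P. a \<in> {u<..<u+\<delta>} \<longrightarrow> lt u a"
        have ext: "dist (psi g x) (psi g u) \<le> c * dist (psi g x) (psi g z)"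
          if "x \<in> {u-\<delta><..<u}" "z \<in> {u<..<u+\<delta>}" for x z
          by (rule extend[OF cont open_greaterThanLessThan Lc open_greaterThanLessThan Rc _ that])
             (use mon uP L R in blast)
        have "\<forall>x\<in>{u-\<delta><..<u}. \<forall>z\<in>{u<..<u+\<delta>}.
          dist (psi g x) (psi g u) \<le> max 1 c * dist (psi g x) (psi g z)"
        proof (intro ballI)
          fix x z assume x: "x \<in> {u-\<delta><..<u}" and z: "z \<in> {u<..<u+\<delta>}"
          have "c * dist (psi g x) (psi g z) \<le> max 1 c * dist (psi g x) (psi g z)"
            by (rule mult_right_mono) auto
          then show "dist (psi g x) (psi g u) \<le> max 1 c * dist (psi g x) (psi g z)"
            using ext[OF x z] by linarith
        qed
        then have "M_point g u" unfolding M_point_def using \<delta>0(1) max.cobounded1 by blast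
        then show ?thesis using noM by blast
      next
        assume L: "\<forall>a\<in>P. a \<in> {u-\<delta><..<u} \<longrightarrow> lt u a" and R: "\<forall>a\<in>P. a \<in> {u<..<u+\<delta>} \<longrightarrow> lt a u"
        have ext: "dist (psi g x) (psi g u) \<le> c * dist (psi g x) (psi g z)"
          if "x \<in> {u<..<u+\<delta>}" "z \<in> {u-\<delta><..<u}" for x z
          by (rule extend[OF cont open_greaterThanLessThan Rc open_greaterThanLessThan Lc _ that])
             (use mon uP L R in blast)
        have "\<forall>x\<in>{-u-\<delta><..<-u}. \<forall>z\<in>{-u<..<-u+\<delta>}.
          dist (psi g x) (psi g (-u)) \<le> max 1 c * dist (psi g x) (psi g z)"
        proof (intro ballI)
          fix x z assume x: "x \<in> {-u-\<delta><..<-u}" and z: "z \<in> {-u<..<-u+\<delta>}"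
          have x': "-x \<in> {u<..<u+\<delta>}" and z': "-z \<in> {u-\<delta><..<u}" using x z by auto
          have e1: "dist (psi g x) (psi g (-u)) = dist (psi g (-x)) (psi g u)"
            using dist_psi_neg[of g "-x" u, OF even] by simp
          have e2: "dist (psi g (-x)) (psi g (-z)) = dist (psi g x) (psi g z)"
            using dist_psi_neg[of g x z, OF even] by simp
          have "c * dist (psi g x) (psi g z) \<le> max 1 c * dist (psi g x) (psi g z)"
            by (rule mult_right_mono) auto
          then show "dist (psi g x) (psi g (-u)) \<le> max 1 c * dist (psi g x) (psi g z)"
          proof -
            have "dist (psi g (- x)) (psi g u) \<le> c * dist (psi g x) (psi g z)"
              using ext[OF x' z'] e2 by simp
            then show ?thesis using e1 \<open>c * dist (psi g x) (psi g z) \<le> max 1 c * dist (psi g x) (psi g z)\<close> by linarith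
          qed
        qed
        then have "M_point g (-u)" unfolding M_point_def using \<delta>0(1) max.cobounded1 by blast
        then show ?thesis using noM by blast
      qed
    qed
  qed
  have C_nd: "interior (closure (C n)) = {}" for n
  proof (rule sep_nowhere[of "1 / real (Suc n)"])
    fix a b assume "a \<in> C n" "b \<in> C n" "a \<noteq> b"
    then show "1 / real (Suc n) \<le> \<bar>a - b\<bar>"
      unfolding C_def using asym by (force simp: abs_minus_commute)
  qed simp
  have D_nd: "interior (closure (Dd n)) = {}" for n
  proof (rule sep_nowhere[of "1 / real (Suc n)"])
    fix a b assume "a \<in> Dd n" "b \<in> Dd n" "a \<noteq> b"
    then show "1 / real (Suc n) \<le> \<bar>a - b\<bar>"
      unfolding Dd_def using asym by (force simp: abs_minus_commute)
  qed simp
  have K_nd: "interior (closure K0) = {}" unfolding K0_def by (rule boundary_nowhere)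
  define F where "F = (\<lambda>M. psi g ` M) ` (insert K0 (range C \<union> range Dd))"
  have cF: "countable F" unfolding F_def by simp
  have nF: "\<forall>N\<in>F. nowhere_dense_in (subtopology euclidean (range (psi g))) N"
    unfolding F_def using transfer_nowhere[OF cont] C_nd D_nd K_nd by blast
  have sF: "S \<subseteq> \<Union>F"
  proof
    fix s assume sS: "s \<in> S"
    then obtain u where u: "s = psi g u" using SG by blast
    then have "u \<in> P" using sS unfolding P_def by simp
    then have "u \<in> K0 \<union> (\<Union>n. C n) \<union> (\<Union>n. Dd n)" using coverP by blast
    then show "s \<in> \<Union>F" unfolding F_def u by blast
  qed
  show ?thesis unfolding meager_in_def using cF nF sF by blast
qed

theorem proposition4p8:
  shows "continuous_on UNIV f48
    \<and> (\<forall>y. \<not> M_point f48 y)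
    \<and> (\<forall>S. S \<subseteq> graph f48 \<and> monotone_metric S \<longrightarrow>
           meager_in (subtopology euclidean (graph f48)) S)
    \<and> (\<forall>x. \<not> (\<exists>D. (f48 has_real_derivative D) (at x))
          \<and> \<not> filterlim (\<lambda>h. (f48 (x + h) - f48 x) / h) at_top (at 0)
          \<and> \<not> filterlim (\<lambda>h. (f48 (x + h) - f48 x) / h) at_bot (at 0))"
proof (intro conjI allI impI)
  show "continuous_on UNIV f48" by (rule continuous_f48)
  show "\<not> M_point f48 y" for y by (rule no_M)
  show "meager_in (subtopology euclidean (graph f48)) S"
    if "S \<subseteq> graph f48 \<and> monotone_metric S" for S
    unfolding graph_def
    by (rule meager_main[OF continuous_f48 f48_even no_M]) (use that in \<open>auto simp: graph_def\<close>)
  show "\<not> (\<exists>D. (f48 has_real_derivative D) (at x))" for x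
    using deriv_M no_M by blast
  show "\<not> filterlim (\<lambda>h. (f48 (x + h) - f48 x) / h) at_top (at 0)" for x
    using top_M no_M by blast
  show "\<not> filterlim (\<lambda>h. (f48 (x + h) - f48 x) / h) at_bot (at 0)" for x
    using bot_M no_M by blast
qed

end
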